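(* Let $n\in\mathbb N$, $1<p<n$, let $\Omega\subseteq\mathbb R^n$ be open, $w\in C^3(\Omega)$ positive, and $\mathscr V:\mathbb R^n\to[0,+\infty)$ of class $C^3(\mathbb R^n\setminus\{0\})$. Set $$\mathsf P=\frac{n(p-1)}{w}\,\mathscr V(\nabla w)+\Big(\frac{p}{n-p}\Big)^{p-1}\frac1w,$$ $\mathsf a(\nabla w)=\nabla_\xi\mathscr V(\nabla w)$, $\mathsf A=(\tilde\alpha_{ij})$ with $\tilde\alpha_{ij}=\partial_{\xi_i\xi_j}\mathscr V(\nabla w)$, and $\mathscr W=\nabla\mathsf a(\nabla w)$, i.e. $\mathscr W_{ik}=\partial_k\big(\mathsf a_i(\nabla w)\big)$. Then in $\Omega\setminus\{x\in\Omega:\nabla w(x)=0\}$ the following identity holds (summation over repeated indices): $$\operatorname{div}\big(w^{2-n}\mathsf A\nabla\mathsf P\big)=w^{1-n}\Big\{-n\langle\mathsf A\nabla\mathsf P,\nabla w\rangle-\mathsf P\operatorname{tr}\mathscr W+n(p-1)\big[\operatorname{tr}\mathscr W^2+\langle\nabla(\operatorname{tr}\mathscr W),\mathsf a(\nabla w)\rangle\big]-\mathsf P\,w_j\,\partial_{\xi_i\xi_j\xi_k}\mathscr V(\nabla w)\,w_{ki}\Big\}.$$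
   Context: $w_j=\partial_jw$, $w_{ki}=\partial_{ki}w$; $\partial_{\xi_i\xi_j\xi_k}\mathscr V$ denotes third partial derivatives of $\mathscr V$ with respect to its argument $\xi\in\mathbb R^n$. *)

theory Defs
  imports "HOL-Analysis.Analysis"
begin

definition pd :: "'n::finite \<Rightarrow> (real^'n \<Rightarrow> real) \<Rightarrow> real^'n \<Rightarrow> real" where
  "pd i f x = deriv (\<lambda>t. f (x + t *\<^sub>R axis i 1)) 0"

definition grad :: "(real^'n::finite \<Rightarrow> real) \<Rightarrow> real^'n \<Rightarrow> real^'n" where
  "grad f x = (\<chi> i. pd i f x)"

fun Ck :: "nat \<Rightarrow> (real^'n::finite \<Rightarrow> real) \<Rightarrow> (real^'n) set \<Rightarrow> bool" where
  "Ck 0 f U = continuous_on U f"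
| "Ck (Suc k) f U = (continuous_on U f \<and>
      (\<forall>i. \<forall>x\<in>U. (\<lambda>t. f (x + t *\<^sub>R axis i 1)) differentiable (at 0)) \<and>
      (\<forall>i. Ck k (pd i f) U))"

end

theory Submission
  imports Defs
begin


definition hpd :: "'n::finite \<Rightarrow> (real^'n \<Rightarrow> real) \<Rightarrow> real^'n \<Rightarrow> real \<Rightarrow> bool" where
 "hpd i f y D \<longleftrightarrow> ((\<lambda>t. f (y + t *\<^sub>R axis i 1)) has_real_derivative D) (at 0)"

lemma hpd_pd: "hpd i f y D \<Longrightarrow> pd i f y = D"
  unfolding hpd_def pd_def by (rule DERIV_imp_deriv)

lemma hpd_pdI: "(\<lambda>t. f (y + t *\<^sub>R axis i 1)) differentiable (at 0) \<Longrightarrow> hpd i f y (pd i f y)"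
  unfolding hpd_def pd_def using DERIV_deriv_iff_real_differentiable by blast

lemma hpd_const: "hpd i (\<lambda>y. c) y 0"
  unfolding hpd_def by simp

lemma hpd_add: "hpd i f y D \<Longrightarrow> hpd i g y E \<Longrightarrow> hpd i (\<lambda>y. f y + g y) y (D + E)"
  unfolding hpd_def by (rule DERIV_add)

lemma hpd_diff: "hpd i f y D \<Longrightarrow> hpd i g y E \<Longrightarrow> hpd i (\<lambda>y. f y - g y) y (D - E)"
  unfolding hpd_def by (rule DERIV_diff)

lemma hpd_mult: "hpd i f y D \<Longrightarrow> hpd i g y E \<Longrightarrow> hpd i (\<lambda>y. f y * g y) y (D * g y + f y * E)"
  unfolding hpd_def by (drule (1) DERIV_mult) (simp add: mult.commute)

lemma hpd_cmult: "hpd i f y D \<Longrightarrow> hpd i (\<lambda>y. c * f y) y (c * D)"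
  unfolding hpd_def by (rule DERIV_cmult)

lemma hpd_divide: "hpd i f y D \<Longrightarrow> hpd i g y E \<Longrightarrow> g y \<noteq> 0 \<Longrightarrow>
   hpd i (\<lambda>y. f y / g y) y ((D * g y - f y * E) / (g y * g y))"
  unfolding hpd_def by (drule (1) DERIV_divide) simp_all

lemma hpd_sum: "finite S \<Longrightarrow> (\<And>k. k \<in> S \<Longrightarrow> hpd i (f k) y (D k)) \<Longrightarrow> hpd i (\<lambda>y. \<Sum>k\<in>S. f k y) y (\<Sum>k\<in>S. D k)"
  unfolding hpd_def by (rule DERIV_sum)

lemma hpd_powr: "hpd i f y D \<Longrightarrow> f y > 0 \<Longrightarrow> hpd i (\<lambda>y. f y powr r) y (r * f y powr (r - 1) * D)"
  unfolding hpd_def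
  apply (drule DERIV_powr[where f="\<lambda>_. r" and r=0])
    apply simp
   apply simp
  apply (simp add: powr_diff mult_ac)
  done

lemma hpd_cong:
  assumes "open N" "y \<in> N" "\<And>z. z \<in> N \<Longrightarrow> f z = g z" "hpd i f y D"
  shows "hpd i g y D"
proof -
  have "eventually (\<lambda>t. y + t *\<^sub>R axis i (1::real) \<in> N) (nhds (0::real))"
  proof -
    have op: "open ((\<lambda>t. y + t *\<^sub>R axis i (1::real)) -` N)"
      using assms(1) by (intro continuous_open_vimage) (auto intro!: continuous_intros)
    then show ?thesis using eventually_nhds_in_open[OF op, of 0] assms(2) by simp
  qed
  then have ev: "eventually (\<lambda>t. f (y + t *\<^sub>R axis i 1) = g (y + t *\<^sub>R axis i 1)) (nhds 0)"
    by eventually_elim (use assms(3) in auto)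
  show ?thesis using assms(4) unfolding hpd_def
    using DERIV_cong_ev[OF refl ev refl] by simp
qed



lemma mvt_abs:
  fixes g g' :: "real \<Rightarrow> real"
  assumes "\<And>t. \<bar>t\<bar> \<le> \<bar>b\<bar> \<Longrightarrow> (g has_real_derivative g' t) (at t)"
  shows "\<exists>\<theta>. \<bar>\<theta>\<bar> \<le> \<bar>b\<bar> \<and> g b - g 0 = b * g' \<theta>"
proof (cases b "0::real" rule: linorder_cases)
  case less
  have "\<exists>z>b. z < 0 \<and> g 0 - g b = (0 - b) * g' z"
    by (rule MVT2[OF less]) (use assms less in auto)
  then obtain z where "z > b" "z < 0" "g 0 - g b = (0 - b) * g' z" by blast
  then show ?thesis by (intro exI[of _ z]) auto
next
  case equal then show ?thesis by auto
next
  case greater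
  have "\<exists>z>0. z < b \<and> g b - g 0 = (b - 0) * g' z"
    by (rule MVT2[OF greater]) (use assms greater in auto)
  then obtain z where "z > 0" "z < b" "g b - g 0 = (b - 0) * g' z" by blast
  then show ?thesis by (intro exI[of _ z]) auto
qed

lemma line_deriv:
  assumes "\<forall>z\<in>U. (\<lambda>t. f (z + t *\<^sub>R axis i 1)) differentiable (at 0)"
    and "z + t *\<^sub>R axis i 1 \<in> U"
  shows "((\<lambda>s. f (z + s *\<^sub>R axis i 1)) has_real_derivative pd i f (z + t *\<^sub>R axis i 1)) (at t)"
proof -
  have "hpd i f (z + t *\<^sub>R axis i 1) (pd i f (z + t *\<^sub>R axis i 1))"
    using assms by (intro hpd_pdI) auto
  then have "((\<lambda>s. f (z + (s + t) *\<^sub>R axis i 1)) has_real_derivative pd i f (z + t *\<^sub>R axis i 1)) (at 0)"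
    unfolding hpd_def by (simp add: scaleR_add_left add_ac)
  then show ?thesis using DERIV_shift[of "\<lambda>s. f (z + s *\<^sub>R axis i 1)" _ 0 t] by simp
qed

definition proj :: "'n::finite set \<Rightarrow> real^'n \<Rightarrow> real^'n" where
  "proj S h = (\<Sum>i\<in>S. h $ i *\<^sub>R axis i 1)"

lemma proj_nth: assumes "finite S" shows "proj S h $ k = (if k \<in> S then h $ k else 0)"
proof -
  have "\<And>x. h $ x * (if k = x then 1 else 0) = (if k = x then h $ k else 0)" by simp
  then show ?thesis using assms unfolding proj_def by (simp add: axis_def)
qed

lemma proj_UNIV: "proj UNIV h = h"
  by (simp add: vec_eq_iff proj_nth)

lemma C1_frechet:
  fixes f :: "real^'n::finite \<Rightarrow> real"
  assumes U: "open U" "x \<in> U"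
    and dif: "\<forall>i. \<forall>z\<in>U. (\<lambda>t. f (z + t *\<^sub>R axis i 1)) differentiable (at 0)"
    and cont: "\<forall>i. continuous_on U (pd i f)"
  shows "(f has_derivative (\<lambda>h. \<Sum>i\<in>UNIV. h $ i * pd i f x)) (at x)"
proof -
  obtain d0 where d0: "d0 > 0" "ball x d0 \<subseteq> U" using U open_contains_ball by blast
  have key: "\<forall>e>0. \<exists>d>0. \<forall>h. norm h < d \<longrightarrow> \<bar>f (x + proj S h) - f x - (\<Sum>i\<in>S. h $ i * pd i f x)\<bar> \<le> e * norm h" for S :: "'n set"
  proof -
    have "finite S" by simp
    then show ?thesis
    proof (induction S rule: finite_induct)
      case empty
      then show ?case by (auto simp: proj_def intro: exI[of _ 1])
    next
      case (insert j S)
      show ?case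
      proof (intro allI impI)
        fix e :: real assume e: "e > 0"
        obtain d1 where d1: "d1 > 0" "\<forall>h. norm h < d1 \<longrightarrow> \<bar>f (x + proj S h) - f x - (\<Sum>i\<in>S. h $ i * pd i f x)\<bar> \<le> e/2 * norm h"
          using insert.IH e by (meson half_gt_zero)
        obtain d2 where d2: "d2 > 0" "\<forall>z\<in>U. dist z x < d2 \<longrightarrow> dist (pd j f z) (pd j f x) < e/2"
          using cont U(2) e unfolding continuous_on_iff by (meson half_gt_zero)
        define d where "d = min d0 (min d1 d2)"
        have "d > 0" using d0 d1 d2 by (simp add: d_def)
        moreover have "\<bar>f (x + proj (insert j S) h) - f x - (\<Sum>i\<in>insert j S. h $ i * pd i f x)\<bar> \<le> e * norm h" if h: "norm h < d" for h
        proof -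
          define z where "z = x + proj S h"
          have seg: "z + t *\<^sub>R axis j 1 \<in> U \<and> dist (z + t *\<^sub>R axis j 1) x < d2" if t: "\<bar>t\<bar> \<le> \<bar>h $ j\<bar>" for t
          proof -
            have "norm (proj S h + t *\<^sub>R axis j 1) \<le> norm h"
              by (rule norm_le_componentwise_cart) (use t insert.hyps in \<open>auto simp: proj_nth axis_def\<close>)
            then have "dist (z + t *\<^sub>R axis j 1) x < d" using h by (simp add: z_def dist_norm)
            then show ?thesis using d0 by (auto simp: d_def dist_commute)
          qed
          have dd: "\<And>s. \<bar>s\<bar> \<le> \<bar>h $ j\<bar> \<Longrightarrow> ((\<lambda>s. f (z + s *\<^sub>R axis j 1)) has_real_derivative pd j f (z + s *\<^sub>R axis j 1)) (at s)"
            using line_deriv[OF spec[OF dif, of j]] seg by blast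
          obtain \<theta> where th: "\<bar>\<theta>\<bar> \<le> \<bar>h $ j\<bar>" "f (z + h $ j *\<^sub>R axis j 1) - f (z + 0 *\<^sub>R axis j 1) = h $ j * pd j f (z + \<theta> *\<^sub>R axis j 1)"
            using mvt_abs[of "h $ j" "\<lambda>s. f (z + s *\<^sub>R axis j 1)" "\<lambda>s. pd j f (z + s *\<^sub>R axis j 1)", OF dd] by blast
          have A: "\<bar>pd j f (z + \<theta> *\<^sub>R axis j 1) - pd j f x\<bar> < e/2" using d2 seg[OF th(1)] by (simp add: dist_real_def)
          have B: "\<bar>f (z + h $ j *\<^sub>R axis j 1) - f z - h $ j * pd j f x\<bar> \<le> e/2 * norm h"
          proof -
            have "\<bar>f (z + h $ j *\<^sub>R axis j 1) - f z - h $ j * pd j f x\<bar> = \<bar>h $ j\<bar> * \<bar>pd j f (z + \<theta> *\<^sub>R axis j 1) - pd j f x\<bar>"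
              using th(2) by (simp add: abs_mult[symmetric] right_diff_distrib)
            also have "\<dots> \<le> norm h * (e/2)" using A by (intro mult_mono) (auto simp: component_le_norm_cart)
            finally show ?thesis by (simp add: mult.commute)
          qed
          have C: "\<bar>f z - f x - (\<Sum>i\<in>S. h $ i * pd i f x)\<bar> \<le> e/2 * norm h" using d1 h by (simp add: z_def d_def)
          have "proj (insert j S) h = proj S h + h $ j *\<^sub>R axis j 1" using insert.hyps by (simp add: proj_def add.commute)
          then have eq: "f (x + proj (insert j S) h) - f x - (\<Sum>i\<in>insert j S. h $ i * pd i f x) = (f (z + h $ j *\<^sub>R axis j 1) - f z - h $ j * pd j f x) + (f z - f x - (\<Sum>i\<in>S. h $ i * pd i f x))"
            using insert.hyps by (simp add: z_def add.assoc)
          show ?thesis unfolding eq by (rule order_trans[OF abs_triangle_ineq]) (use B C in linarith)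
        qed
        ultimately show "\<exists>d>0. \<forall>h. norm h < d \<longrightarrow> \<bar>f (x + proj (insert j S) h) - f x - (\<Sum>i\<in>insert j S. h $ i * pd i f x)\<bar> \<le> e * norm h"
          by blast
      qed
    qed
  qed
  have lin: "linear (\<lambda>h::real^'n. \<Sum>i\<in>UNIV. h $ i * pd i f x)"
    by (rule linearI) (simp_all add: sum.distrib algebra_simps sum_distrib_left)
  show ?thesis unfolding has_derivative_at_alt
  proof (intro conjI allI impI)
    show "bounded_linear (\<lambda>h::real^'n. \<Sum>i\<in>UNIV. h $ i * pd i f x)" using lin by (simp add: linear_conv_bounded_linear)
    fix e :: real assume "e > 0"
    then obtain d where d: "d > 0" "\<forall>h. norm h < d \<longrightarrow> \<bar>f (x + h) - f x - (\<Sum>i\<in>UNIV. h $ i * pd i f x)\<bar> \<le> e * norm h"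
      using key[of UNIV] unfolding proj_UNIV by blast
    show "\<exists>d>0. \<forall>y. norm (y - x) < d \<longrightarrow> norm (f y - f x - (\<Sum>i\<in>UNIV. (y - x) $ i * pd i f x)) \<le> e * norm (y - x)"
    proof (intro exI[of _ d] conjI allI impI)
      fix y assume "norm (y - x) < d"
      then have "\<bar>f (x + (y - x)) - f x - (\<Sum>i\<in>UNIV. (y - x) $ i * pd i f x)\<bar> \<le> e * norm (y - x)"
        using d(2) by blast
      then show "norm (f y - f x - (\<Sum>i\<in>UNIV. (y - x) $ i * pd i f x)) \<le> e * norm (y - x)" by simp
    qed (rule d(1))
  qed
qed



lemma hpd_chain:
  fixes F :: "real^'n::finite \<Rightarrow> real" and G :: "real^'n \<Rightarrow> real^'n"
  assumes F: "(F has_derivative (\<lambda>h. \<Sum>k\<in>UNIV. h $ k * DF k)) (at (G y))"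
    and G: "\<And>k. hpd i (\<lambda>y. G y $ k) y (DG k)"
  shows "hpd i (\<lambda>y. F (G y)) y (\<Sum>k\<in>UNIV. DF k * DG k)"
proof -
  let ?g = "\<lambda>t. G (y + t *\<^sub>R axis i 1)"
  have comp: "((\<lambda>t. ?g t $ k) has_derivative (\<lambda>x. x * DG k)) (at 0)" for k
  proof -
    have "(\<lambda>x. x * DG k) = (*) (DG k)" by (auto simp: fun_eq_iff)
    then show ?thesis using G[of k] unfolding hpd_def has_field_derivative_def by simp
  qed
  have vd: "(?g has_vector_derivative (\<chi> k. DG k)) (at 0)"
    unfolding has_vector_derivative_def
  proof (subst has_derivative_componentwise_within, intro ballI)
    fix b :: "real^'n" assume "b \<in> Basis"
    then obtain k where b: "b = axis k 1" by (auto simp: Basis_vec_def)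
    show "((\<lambda>x. ?g x \<bullet> b) has_derivative (\<lambda>x. (x *\<^sub>R (\<chi> k. DG k)) \<bullet> b)) (at 0)"
      using comp[of k] unfolding b by (simp add: inner_axis)
  qed
  have "(F has_derivative (\<lambda>h. \<Sum>k\<in>UNIV. h $ k * DF k)) (at (?g 0) within ?g ` UNIV)"
    using F by (simp add: has_derivative_at_withinI)
  from vector_derivative_diff_chain_within[OF vd[unfolded at_within_def[symmetric]] this]
  have "((F \<circ> ?g) has_vector_derivative (\<Sum>k\<in>UNIV. DG k * DF k)) (at 0)"
    by simp
  then show ?thesis unfolding hpd_def has_real_derivative_iff_has_vector_derivative
    by (simp add: o_def mult.commute)
qed



lemma schwarz_approx:
  fixes f :: "real^'n::finite \<Rightarrow> real"
  assumes U: "open U" "x \<in> U"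
    and dif: "\<forall>i. \<forall>z\<in>U. (\<lambda>t. f (z + t *\<^sub>R axis i 1)) differentiable (at 0)"
    and dif1: "\<forall>i j. \<forall>z\<in>U. (\<lambda>t. pd i f (z + t *\<^sub>R axis j 1)) differentiable (at 0)"
    and cont: "\<forall>i j. continuous_on U (pd j (pd i f))"
    and e: "e > 0"
  shows "\<exists>d>0. \<forall>s. \<bar>s\<bar> < d \<longrightarrow>
     \<bar>(f (x + s *\<^sub>R axis j 1 + s *\<^sub>R axis i 1) - f (x + s *\<^sub>R axis i 1) - f (x + s *\<^sub>R axis j 1) + f x)
       - s\<^sup>2 * pd j (pd i f) x\<bar> \<le> e * s\<^sup>2"
proof -
  obtain d0 where d0: "d0 > 0" "ball x d0 \<subseteq> U" using U open_contains_ball by blast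
  obtain d2 where d2: "d2 > 0" "\<forall>z\<in>U. dist z x < d2 \<longrightarrow> dist (pd j (pd i f) z) (pd j (pd i f) x) < e"
    using cont U(2) e unfolding continuous_on_iff by blast
  define d where "d = min d0 d2 / 2"
  have "d > 0" using d0 d2 by (simp add: d_def)
  moreover have "\<bar>(f (x + s *\<^sub>R axis j 1 + s *\<^sub>R axis i 1) - f (x + s *\<^sub>R axis i 1) - f (x + s *\<^sub>R axis j 1) + f x)
       - s\<^sup>2 * pd j (pd i f) x\<bar> \<le> e * s\<^sup>2" if s: "\<bar>s\<bar> < d" for s
  proof -
    have pt: "x + t *\<^sub>R axis i 1 + r *\<^sub>R axis j 1 \<in> U \<and> dist (x + t *\<^sub>R axis i 1 + r *\<^sub>R axis j 1) x < d2"
      if "\<bar>t\<bar> \<le> \<bar>s\<bar>" "\<bar>r\<bar> \<le> \<bar>s\<bar>" for t r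
    proof -
      have "norm (t *\<^sub>R axis i (1::real) + r *\<^sub>R axis j 1) \<le> \<bar>t\<bar> + \<bar>r\<bar>"
        by (rule order_trans[OF norm_triangle_ineq]) simp
      also have "\<dots> < min d0 d2" using that s by (simp add: d_def)
      finally have "dist (x + t *\<^sub>R axis i 1 + r *\<^sub>R axis j 1) x < min d0 d2"
        by (simp add: dist_norm add.assoc)
      then show ?thesis using d0 by (auto simp: dist_commute)
    qed
    define g where "g t = f ((x + s *\<^sub>R axis j 1) + t *\<^sub>R axis i 1) - f (x + t *\<^sub>R axis i 1)" for t
    have gd: "(g has_real_derivative (pd i f ((x + s *\<^sub>R axis j 1) + t *\<^sub>R axis i 1) - pd i f (x + t *\<^sub>R axis i 1))) (at t)"
      if "\<bar>t\<bar> \<le> \<bar>s\<bar>" for t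
    proof -
      have m1: "(x + s *\<^sub>R axis j 1) + t *\<^sub>R axis i 1 \<in> U" using pt[OF that, of s] by (simp add: add_ac)
      have m2: "x + t *\<^sub>R axis i 1 \<in> U" using pt[OF that, of 0] by simp
      show ?thesis unfolding g_def
        by (intro DERIV_diff line_deriv[OF spec[OF dif, of i]] m1 m2)
    qed
    obtain t1 where t1: "\<bar>t1\<bar> \<le> \<bar>s\<bar>" "g s - g 0 = s * (pd i f ((x + s *\<^sub>R axis j 1) + t1 *\<^sub>R axis i 1) - pd i f (x + t1 *\<^sub>R axis i 1))"
      using mvt_abs[of s g, OF gd] by blast
    define h where "h r = pd i f ((x + t1 *\<^sub>R axis i 1) + r *\<^sub>R axis j 1)" for r
    have hd: "(h has_real_derivative pd j (pd i f) ((x + t1 *\<^sub>R axis i 1) + r *\<^sub>R axis j 1)) (at r)"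
      if "\<bar>r\<bar> \<le> \<bar>s\<bar>" for r
      unfolding h_def using line_deriv[OF spec[OF spec[OF dif1, of i], of j] pt[OF t1(1) that, THEN conjunct1]]
      by simp
    obtain t2 where t2: "\<bar>t2\<bar> \<le> \<bar>s\<bar>" "h s - h 0 = s * pd j (pd i f) ((x + t1 *\<^sub>R axis i 1) + t2 *\<^sub>R axis j 1)"
      using mvt_abs[of s h, OF hd] by blast
    have eq: "f (x + s *\<^sub>R axis j 1 + s *\<^sub>R axis i 1) - f (x + s *\<^sub>R axis i 1) - f (x + s *\<^sub>R axis j 1) + f x
       = s\<^sup>2 * pd j (pd i f) ((x + t1 *\<^sub>R axis i 1) + t2 *\<^sub>R axis j 1)"
    proof -
      have "f (x + s *\<^sub>R axis j 1 + s *\<^sub>R axis i 1) - f (x + s *\<^sub>R axis i 1) - f (x + s *\<^sub>R axis j 1) + f x = g s - g 0"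
        by (simp add: g_def)
      also have "\<dots> = s * (h s - h 0)" unfolding t1(2) h_def by (simp add: add_ac)
      also have "\<dots> = s\<^sup>2 * pd j (pd i f) ((x + t1 *\<^sub>R axis i 1) + t2 *\<^sub>R axis j 1)"
        unfolding t2(2) by (simp add: power2_eq_square)
      finally show ?thesis .
    qed
    have "\<bar>pd j (pd i f) ((x + t1 *\<^sub>R axis i 1) + t2 *\<^sub>R axis j 1) - pd j (pd i f) x\<bar> < e"
      using d2(2) pt[OF t1(1) t2(1)] by (simp add: dist_real_def)
    then have "s\<^sup>2 * \<bar>pd j (pd i f) ((x + t1 *\<^sub>R axis i 1) + t2 *\<^sub>R axis j 1) - pd j (pd i f) x\<bar> \<le> s\<^sup>2 * e"
      by (intro mult_left_mono) auto
    then show ?thesis unfolding eq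
      by (simp add: abs_mult right_diff_distrib[symmetric] mult.commute)
  qed
  ultimately show ?thesis by blast
qed

lemma aux_false: "(a::real) \<le> 2*(a/4) \<Longrightarrow> 0 < a/4 \<Longrightarrow> False" by linarith

lemma schwarz:
  fixes f :: "real^'n::finite \<Rightarrow> real"
  assumes U: "open U" "x \<in> U"
    and dif: "\<forall>i. \<forall>z\<in>U. (\<lambda>t. f (z + t *\<^sub>R axis i 1)) differentiable (at 0)"
    and dif1: "\<forall>i j. \<forall>z\<in>U. (\<lambda>t. pd i f (z + t *\<^sub>R axis j 1)) differentiable (at 0)"
    and cont: "\<forall>i j. continuous_on U (pd j (pd i f))"
  shows "pd j (pd i f) x = pd i (pd j f) x"
proof (rule ccontr)
  let ?D1 = "pd j (pd i f) x" and ?D2 = "pd i (pd j f) x"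
  assume ne: "?D1 \<noteq> ?D2"
  define e where "e = \<bar>?D1 - ?D2\<bar> / 4"
  have e: "e > 0" using ne by (simp add: e_def)
  obtain d1 where d1: "d1 > 0" "\<forall>s. \<bar>s\<bar> < d1 \<longrightarrow>
     \<bar>(f (x + s *\<^sub>R axis j 1 + s *\<^sub>R axis i 1) - f (x + s *\<^sub>R axis i 1) - f (x + s *\<^sub>R axis j 1) + f x)
       - s\<^sup>2 * ?D1\<bar> \<le> e * s\<^sup>2"
    using schwarz_approx[OF U dif dif1 cont e, of j i] by blast
  obtain d2 where d2: "d2 > 0" "\<forall>s. \<bar>s\<bar> < d2 \<longrightarrow>
     \<bar>(f (x + s *\<^sub>R axis i 1 + s *\<^sub>R axis j 1) - f (x + s *\<^sub>R axis j 1) - f (x + s *\<^sub>R axis i 1) + f x)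
       - s\<^sup>2 * ?D2\<bar> \<le> e * s\<^sup>2"
    using schwarz_approx[OF U dif dif1 cont e, of i j] by blast
  define s where "s = min d1 d2 / 2"
  have s: "s > 0" "\<bar>s\<bar> < d1" "\<bar>s\<bar> < d2" using d1 d2 by (auto simp: s_def)
  define Q where "Q = f (x + s *\<^sub>R axis j 1 + s *\<^sub>R axis i 1) - f (x + s *\<^sub>R axis i 1) - f (x + s *\<^sub>R axis j 1) + f x"
  have Q2: "f (x + s *\<^sub>R axis i 1 + s *\<^sub>R axis j 1) - f (x + s *\<^sub>R axis j 1) - f (x + s *\<^sub>R axis i 1) + f x = Q"
    unfolding Q_def by (simp add: add_ac)
  have a: "\<bar>Q - s\<^sup>2 * ?D1\<bar> \<le> e * s\<^sup>2" using d1(2) s unfolding Q_def by blast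
  have b: "\<bar>Q - s\<^sup>2 * ?D2\<bar> \<le> e * s\<^sup>2" using d2(2) s Q2 by metis
  have "s\<^sup>2 * \<bar>?D1 - ?D2\<bar> \<le> s\<^sup>2 * (2 * e)"
  proof -
    have "s\<^sup>2 * \<bar>?D1 - ?D2\<bar> = \<bar>s\<^sup>2 * (?D1 - ?D2)\<bar>"
      by (simp add: abs_mult)
    also have "\<dots> = \<bar>(Q - s\<^sup>2 * ?D2) - (Q - s\<^sup>2 * ?D1)\<bar>"
      by (simp add: right_diff_distrib)
    also have "\<dots> \<le> s\<^sup>2 * (2 * e)" using a b by (simp add: algebra_simps)
    finally show ?thesis .
  qed
  then have "\<bar>?D1 - ?D2\<bar> \<le> 2 * e" using s(1) by (simp add: mult_le_cancel_left)
  then show False using e unfolding e_def using aux_false by blast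
qed



lemma swd1: "(\<Sum>a\<in>A. \<Sum>b\<in>B. \<Sum>c\<in>C. f a b c) = (\<Sum>a\<in>A. \<Sum>c\<in>C. \<Sum>b\<in>B. f a b c)"
  by (rule sum.cong[OF refl], rule sum.swap)
lemma swd2: "(\<Sum>a\<in>A. \<Sum>b\<in>B. \<Sum>c\<in>C. \<Sum>d\<in>D. f a b c d) = (\<Sum>a\<in>A. \<Sum>b\<in>B. \<Sum>d\<in>D. \<Sum>c\<in>C. f a b c d)"
  by (rule sum.cong[OF refl], rule sum.cong[OF refl], rule sum.swap)

lemma alg:
  fixes w1 V1 S Q DT :: "'n::finite \<Rightarrow> real" and w2 V2 DS DQ A DA W :: "'n \<Rightarrow> 'n \<Rightarrow> real"
    and w3 V3 :: "'n \<Rightarrow> 'n \<Rightarrow> 'n \<Rightarrow> real"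
  assumes w0: "w0 > 0"
    and sw2: "\<And>a b. w2 a b = w2 b a" and sV2: "\<And>a b. V2 a b = V2 b a"
    and sw3a: "\<And>a b c. w3 a b c = w3 b a c" and sw3b: "\<And>a b c. w3 a b c = w3 a c b"
    and sV3a: "\<And>a b c. V3 a b c = V3 b a c" and sV3b: "\<And>a b c. V3 a b c = V3 a c b"
    and S: "\<And>j. S j = (\<Sum>k\<in>UNIV. V1 k * w2 k j)"
    and DS: "\<And>i j. DS i j = (\<Sum>k\<in>UNIV. (\<Sum>r\<in>UNIV. V2 k r * w2 r i) * w2 k j + V1 k * w3 k j i)"
    and Q: "\<And>j. Q j = (M * S j - P0 * w1 j) / w0"
    and DQ: "\<And>i j. DQ i j = ((M * DS i j - (Q i * w1 j + P0 * w2 j i)) * w0 - (M * S j - P0 * w1 j) * w1 i) / (w0 * w0)"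
    and A: "\<And>i j. A i j = V2 j i"
    and DA: "\<And>i j. DA i j = (\<Sum>k\<in>UNIV. V3 j i k * w2 k i)"
    and W: "\<And>i k. W i k = (\<Sum>m\<in>UNIV. V2 i m * w2 m k)"
    and DT: "\<And>i. DT i = (\<Sum>l\<in>UNIV. \<Sum>m\<in>UNIV. (\<Sum>r\<in>UNIV. V3 l m r * w2 r i) * w2 m l + V2 l m * w3 m l i)"
  shows "w0 * (\<Sum>i\<in>UNIV. \<Sum>j\<in>UNIV. DA i j * Q j + A i j * DQ i j) + (2 - n') * (\<Sum>i\<in>UNIV. w1 i * (\<Sum>j\<in>UNIV. A i j * Q j))
    = - n' * (\<Sum>i\<in>UNIV. (\<Sum>j\<in>UNIV. A i j * Q j) * w1 i) - P0 * (\<Sum>i\<in>UNIV. W i i)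
      + M * ((\<Sum>i\<in>UNIV. \<Sum>k\<in>UNIV. W i k * W k i) + (\<Sum>i\<in>UNIV. DT i * V1 i))
      - P0 * (\<Sum>i\<in>UNIV. \<Sum>j\<in>UNIV. \<Sum>k\<in>UNIV. w1 j * V3 i j k * w2 i k)"
proof -
  define T where "T = (\<Sum>i\<in>UNIV. \<Sum>j\<in>UNIV. A i j * Q j * w1 i)"
  define T' where "T' = (\<Sum>i\<in>UNIV. \<Sum>j\<in>UNIV. A i j * Q i * w1 j)"
  define X1 where "X1 = (\<Sum>i\<in>UNIV. \<Sum>j\<in>UNIV. DA i j * S j)"
  define X2 where "X2 = (\<Sum>i\<in>UNIV. \<Sum>j\<in>UNIV. DA i j * w1 j)"
  define X3 where "X3 = (\<Sum>i\<in>UNIV. \<Sum>j\<in>UNIV. A i j * DS i j)"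
  define trW' where "trW' = (\<Sum>i\<in>UNIV. \<Sum>j\<in>UNIV. A i j * w2 j i)"
  have wQ: "w0 * Q j = M * S j - P0 * w1 j" for j using w0 by (simp add: Q)
  have wDQ: "w0 * DQ i j = M * DS i j - Q i * w1 j - P0 * w2 j i - Q j * w1 i" for i j
    using w0 by (simp add: DQ Q field_simps)
  have L: "w0 * (\<Sum>i\<in>UNIV. \<Sum>j\<in>UNIV. DA i j * Q j + A i j * DQ i j)
     = M * X1 - P0 * X2 + M * X3 - T' - P0 * trW' - T"
  proof -
    have "w0 * (\<Sum>i\<in>UNIV. \<Sum>j\<in>UNIV. DA i j * Q j + A i j * DQ i j)
       = (\<Sum>i\<in>UNIV. \<Sum>j\<in>UNIV. DA i j * (w0 * Q j) + A i j * (w0 * DQ i j))"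
      by (simp add: sum_distrib_left algebra_simps)
    also have "\<dots> = (\<Sum>i\<in>UNIV. \<Sum>j\<in>UNIV. M * (DA i j * S j) - P0 * (DA i j * w1 j) + M * (A i j * DS i j)
        - A i j * Q i * w1 j - P0 * (A i j * w2 j i) - A i j * Q j * w1 i)"
      unfolding wQ wDQ by (simp add: algebra_simps)
    also have "\<dots> = M * X1 - P0 * X2 + M * X3 - T' - P0 * trW' - T"
      unfolding X1_def X2_def X3_def T'_def trW'_def T_def
      by (simp add: sum.distrib sum_subtractf sum_distrib_left)
    finally show ?thesis .
  qed
  have TT: "T' = T"
    unfolding T'_def T_def A by (subst sum.swap) (simp add: sV2 mult_ac)
  have T1: "(\<Sum>i\<in>UNIV. w1 i * (\<Sum>j\<in>UNIV. A i j * Q j)) = T"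
    unfolding T_def by (simp only: sum_distrib_left) (simp add: mult_ac)
  have T2: "(\<Sum>i\<in>UNIV. (\<Sum>j\<in>UNIV. A i j * Q j) * w1 i) = T"
    unfolding T_def by (simp only: sum_distrib_right)
  have trW: "trW' = (\<Sum>i\<in>UNIV. W i i)"
    unfolding trW'_def W A by (simp add: sV2)
  have X25: "X2 = (\<Sum>i\<in>UNIV. \<Sum>j\<in>UNIV. \<Sum>k\<in>UNIV. w1 j * V3 i j k * w2 i k)"
    unfolding X2_def DA by (simp add: sum_distrib_right sum_distrib_left sV3a[of _ _] sw2[of _ _] mult_ac)
  have pw1: "V2 j i * (V2 k r * w2 r i * w2 k j) = V2 i j * w2 j k * (V2 k r * w2 r i)" for i j k r
    using sV2[of j i] sw2[of k j] by simp
  have X3a: "(\<Sum>i\<in>UNIV. \<Sum>j\<in>UNIV. A i j * (\<Sum>k\<in>UNIV. (\<Sum>r\<in>UNIV. V2 k r * w2 r i) * w2 k j))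
      = (\<Sum>i\<in>UNIV. \<Sum>k\<in>UNIV. W i k * W k i)"
  proof -
    have "(\<Sum>i\<in>UNIV. \<Sum>j\<in>UNIV. A i j * (\<Sum>k\<in>UNIV. (\<Sum>r\<in>UNIV. V2 k r * w2 r i) * w2 k j))
       = (\<Sum>i\<in>UNIV. \<Sum>j\<in>UNIV. \<Sum>k\<in>UNIV. \<Sum>r\<in>UNIV. V2 j i * (V2 k r * w2 r i * w2 k j))"
      unfolding A by (simp only: sum_distrib_left sum_distrib_right)
    also have "\<dots> = (\<Sum>i\<in>UNIV. \<Sum>k\<in>UNIV. \<Sum>j\<in>UNIV. \<Sum>r\<in>UNIV. V2 j i * (V2 k r * w2 r i * w2 k j))"
      by (rule swd1)
    also have "\<dots> = (\<Sum>i\<in>UNIV. \<Sum>k\<in>UNIV. \<Sum>j\<in>UNIV. \<Sum>r\<in>UNIV. V2 i j * w2 j k * (V2 k r * w2 r i))"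
      by (simp only: pw1)
    also have "\<dots> = (\<Sum>i\<in>UNIV. \<Sum>k\<in>UNIV. \<Sum>r\<in>UNIV. \<Sum>j\<in>UNIV. V2 i j * w2 j k * (V2 k r * w2 r i))"
      by (rule swd2)
    also have "\<dots> = (\<Sum>i\<in>UNIV. \<Sum>k\<in>UNIV. W i k * W k i)"
      unfolding W by (simp only: sum_distrib_left sum_distrib_right)
    finally show ?thesis .
  qed
  have pw2: "V2 c b * (V1 a * w3 a c b) = V2 b c * w3 c b a * V1 a" for a b c
  proof -
    have "w3 a c b = w3 c b a" using sw3a sw3b by metis
    then show ?thesis using sV2[of c b] by simp
  qed
  have X3b: "(\<Sum>i\<in>UNIV. \<Sum>j\<in>UNIV. A i j * (\<Sum>k\<in>UNIV. V1 k * w3 k j i))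
      = (\<Sum>i\<in>UNIV. (\<Sum>l\<in>UNIV. \<Sum>m\<in>UNIV. V2 l m * w3 m l i) * V1 i)"
  proof -
    have "(\<Sum>i\<in>UNIV. \<Sum>j\<in>UNIV. A i j * (\<Sum>k\<in>UNIV. V1 k * w3 k j i))
      = (\<Sum>i\<in>UNIV. \<Sum>j\<in>UNIV. \<Sum>k\<in>UNIV. V2 j i * (V1 k * w3 k j i))"
      unfolding A by (simp only: sum_distrib_left sum_distrib_right)
    also have "\<dots> = (\<Sum>i\<in>UNIV. \<Sum>k\<in>UNIV. \<Sum>j\<in>UNIV. V2 j i * (V1 k * w3 k j i))"
      by (rule swd1)
    also have "\<dots> = (\<Sum>k\<in>UNIV. \<Sum>i\<in>UNIV. \<Sum>j\<in>UNIV. V2 j i * (V1 k * w3 k j i))"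
      by (rule sum.swap)
    also have "\<dots> = (\<Sum>k\<in>UNIV. \<Sum>i\<in>UNIV. \<Sum>j\<in>UNIV. V2 i j * w3 j i k * V1 k)"
      by (simp only: pw2)
    also have "\<dots> = (\<Sum>i\<in>UNIV. (\<Sum>l\<in>UNIV. \<Sum>m\<in>UNIV. V2 l m * w3 m l i) * V1 i)"
      by (simp only: sum_distrib_left sum_distrib_right)
    finally show ?thesis .
  qed
  have pw3: "V3 j i k * w2 k i * (V1 l * w2 l j) = V3 i k j * w2 j l * w2 k i * V1 l" for i j k l
  proof -
    have "V3 j i k = V3 i k j" using sV3a sV3b by metis
    then show ?thesis using sw2[of l j] by simp
  qed
  have X14: "X1 = (\<Sum>i\<in>UNIV. (\<Sum>l\<in>UNIV. \<Sum>m\<in>UNIV. (\<Sum>r\<in>UNIV. V3 l m r * w2 r i) * w2 m l) * V1 i)"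
  proof -
    have "X1 = (\<Sum>i\<in>UNIV. \<Sum>j\<in>UNIV. \<Sum>l\<in>UNIV. \<Sum>k\<in>UNIV. V3 j i k * w2 k i * (V1 l * w2 l j))"
      unfolding X1_def DA S by (simp only: sum_distrib_left sum_distrib_right)
    also have "\<dots> = (\<Sum>i\<in>UNIV. \<Sum>l\<in>UNIV. \<Sum>j\<in>UNIV. \<Sum>k\<in>UNIV. V3 j i k * w2 k i * (V1 l * w2 l j))"
      by (rule swd1)
    also have "\<dots> = (\<Sum>l\<in>UNIV. \<Sum>i\<in>UNIV. \<Sum>j\<in>UNIV. \<Sum>k\<in>UNIV. V3 j i k * w2 k i * (V1 l * w2 l j))"
      by (rule sum.swap)
    also have "\<dots> = (\<Sum>l\<in>UNIV. \<Sum>i\<in>UNIV. \<Sum>k\<in>UNIV. \<Sum>j\<in>UNIV. V3 j i k * w2 k i * (V1 l * w2 l j))"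
      by (rule swd2)
    also have "\<dots> = (\<Sum>l\<in>UNIV. \<Sum>i\<in>UNIV. \<Sum>k\<in>UNIV. \<Sum>j\<in>UNIV. V3 i k j * w2 j l * w2 k i * V1 l)"
      by (simp only: pw3)
    also have "\<dots> = (\<Sum>i\<in>UNIV. (\<Sum>l\<in>UNIV. \<Sum>m\<in>UNIV. (\<Sum>r\<in>UNIV. V3 l m r * w2 r i) * w2 m l) * V1 i)"
      by (simp only: sum_distrib_left sum_distrib_right)
    finally show ?thesis .
  qed
  have X34: "X1 + X3 = (\<Sum>i\<in>UNIV. \<Sum>k\<in>UNIV. W i k * W k i) + (\<Sum>i\<in>UNIV. DT i * V1 i)"
  proof -
    have "X3 = (\<Sum>i\<in>UNIV. \<Sum>j\<in>UNIV. A i j * (\<Sum>k\<in>UNIV. (\<Sum>r\<in>UNIV. V2 k r * w2 r i) * w2 k j))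
       + (\<Sum>i\<in>UNIV. \<Sum>j\<in>UNIV. A i j * (\<Sum>k\<in>UNIV. V1 k * w3 k j i))"
      unfolding X3_def DS by (simp add: sum.distrib distrib_left)
    moreover have "(\<Sum>i\<in>UNIV. DT i * V1 i) = (\<Sum>i\<in>UNIV. (\<Sum>l\<in>UNIV. \<Sum>m\<in>UNIV. (\<Sum>r\<in>UNIV. V3 l m r * w2 r i) * w2 m l) * V1 i)
        + (\<Sum>i\<in>UNIV. (\<Sum>l\<in>UNIV. \<Sum>m\<in>UNIV. V2 l m * w3 m l i) * V1 i)"
      unfolding DT by (simp add: sum.distrib distrib_right)
    ultimately show ?thesis using X3a X3b X14 by simp
  qed
  show ?thesis
    unfolding L T1 T2 TT trW X25[symmetric] using arg_cong[OF X34, of "\<lambda>z. M * z"]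
    by (simp add: algebra_simps)
qed



definition LD :: "(real^'n::finite \<Rightarrow> real) \<Rightarrow> (real^'n) set \<Rightarrow> bool" where
  "LD f U \<longleftrightarrow> (\<forall>i. \<forall>z\<in>U. (\<lambda>t. f (z + t *\<^sub>R axis i 1)) differentiable (at 0))"

lemma Ck3_D:
  assumes "Ck 3 f U"
  shows "continuous_on U f" "LD f U" "continuous_on U (pd i f)" "LD (pd i f) U"
    "continuous_on U (pd j (pd i f))" "LD (pd j (pd i f)) U" "continuous_on U (pd k (pd j (pd i f)))"
  using assms by (simp_all add: eval_nat_numeral LD_def)

lemma hpd_sumU: fixes f :: "'k::finite \<Rightarrow> real^'n::finite \<Rightarrow> real" shows "(\<And>k. hpd i (f k) y (D k)) \<Longrightarrow> hpd i (\<lambda>y. \<Sum>k\<in>UNIV. f k y) y (\<Sum>k\<in>UNIV. D k)"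
  by (rule hpd_sum) auto

lemma hpd_eq: "hpd i f y D \<Longrightarrow> D = D' \<Longrightarrow> hpd i f y D'" by simp

lemma pd_cong:
  assumes "open U" "z \<in> U" "\<And>y. y \<in> U \<Longrightarrow> f y = g y" "LD f U"
  shows "pd i f z = pd i g z"
proof -
  have "hpd i f z (pd i f z)" using assms(2,4) by (intro hpd_pdI) (auto simp: LD_def)
  then have "hpd i g z (pd i f z)" using assms(1,2,3) hpd_cong by blast
  then show ?thesis by (simp add: hpd_pd)
qed

lemma hpd_LD: "LD f U \<Longrightarrow> z \<in> U \<Longrightarrow> hpd i f z (pd i f z)"
  by (intro hpd_pdI) (auto simp: LD_def)

context
  fixes f :: "real^'n::finite \<Rightarrow> real" and U
  assumes C: "Ck 3 f U" and U: "open U"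
begin

lemma C3_frechet0: "z \<in> U \<Longrightarrow> (f has_derivative (\<lambda>h. \<Sum>k\<in>UNIV. h $ k * pd k f z)) (at z)"
  using C1_frechet[OF U, of z f] Ck3_D[OF C] unfolding LD_def by blast

lemma C3_frechet1: "z \<in> U \<Longrightarrow> (pd i f has_derivative (\<lambda>h. \<Sum>k\<in>UNIV. h $ k * pd k (pd i f) z)) (at z)"
  using C1_frechet[OF U, of z "pd i f"] Ck3_D[OF C] unfolding LD_def by blast

lemma C3_frechet2: "z \<in> U \<Longrightarrow> (pd j (pd i f) has_derivative (\<lambda>h. \<Sum>k\<in>UNIV. h $ k * pd k (pd j (pd i f)) z)) (at z)"
  using C1_frechet[OF U, of z "pd j (pd i f)"] Ck3_D[OF C] unfolding LD_def by blast

lemma C3_sym2: "z \<in> U \<Longrightarrow> pd j (pd i f) z = pd i (pd j f) z"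
  by (rule schwarz[OF U]) (use Ck3_D[OF C] in \<open>auto simp: LD_def\<close>)

lemma C3_sym3a: "z \<in> U \<Longrightarrow> pd k (pd j (pd i f)) z = pd j (pd k (pd i f)) z"
  by (rule schwarz[OF U]) (use Ck3_D[OF C] in \<open>auto simp: LD_def\<close>)

lemma C3_sym3b: "z \<in> U \<Longrightarrow> pd k (pd j (pd i f)) z = pd k (pd i (pd j f)) z"
  by (rule pd_cong[OF U]) (use C3_sym2 Ck3_D[OF C] in auto)

end



theorem proposition3p1:
  fixes p :: real and \<Omega> :: "(real^'n) set"
    and w :: "real^'n \<Rightarrow> real" and V :: "real^'n \<Rightarrow> real"
    and P :: "real^'n \<Rightarrow> real"
    and a :: "'n \<Rightarrow> real^'n \<Rightarrow> real"
    and A :: "'n \<Rightarrow> 'n \<Rightarrow> real^'n \<Rightarrow> real"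
    and W :: "'n \<Rightarrow> 'n \<Rightarrow> real^'n \<Rightarrow> real"
    and x :: "real^'n"
  assumes "1 < p" and "p < real CARD('n)"
    and "open \<Omega>"
    and "Ck 3 w \<Omega>" and "\<forall>y\<in>\<Omega>. w y > 0"
    and "\<forall>\<xi>. V \<xi> \<ge> 0" and "Ck 3 V (UNIV - {0})"
    and P_def: "\<And>y. P y = real CARD('n) * (p - 1) / w y * V (grad w y)
                          + (p / (real CARD('n) - p)) powr (p - 1) / w y"
    and a_def: "\<And>i y. a i y = pd i V (grad w y)"
    and A_def: "\<And>i j y. A i j y = pd i (pd j V) (grad w y)"
    and W_def: "\<And>i k y. W i k y = pd k (a i) y"
    and "x \<in> \<Omega>" and "grad w x \<noteq> 0"
  shows "(\<Sum>i\<in>UNIV. pd i (\<lambda>y. w y powr (2 - real CARD('n)) * (\<Sum>j\<in>UNIV. A i j y * pd j P y)) x)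
       = w x powr (1 - real CARD('n)) *
         ( - real CARD('n) * (\<Sum>i\<in>UNIV. (\<Sum>j\<in>UNIV. A i j x * pd j P x) * pd i w x)
           - P x * (\<Sum>i\<in>UNIV. W i i x)
           + real CARD('n) * (p - 1) *
               ((\<Sum>i\<in>UNIV. \<Sum>k\<in>UNIV. W i k x * W k i x)
                + (\<Sum>i\<in>UNIV. pd i (\<lambda>y. \<Sum>l\<in>UNIV. W l l y) x * a i x))
           - P x * (\<Sum>i\<in>UNIV. \<Sum>j\<in>UNIV. \<Sum>k\<in>UNIV.
                      pd j w x * pd k (pd j (pd i V)) (grad w x) * pd k (pd i w) x))"
proof -
  let ?n = "real CARD('n)"
  define M where "M = ?n * (p - 1)"
  define c where "c = (p / (?n - p)) powr (p - 1)"
  define G where "G = grad w"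
  define U0 where "U0 = (UNIV - {0::real^'n})"
  have oU0: "open U0" unfolding U0_def by (simp add: open_Diff)
  have oO: "open \<Omega>" by (rule assms(3))
  have Cw: "Ck 3 w \<Omega>" by (rule assms(4))
  have CV: "Ck 3 V U0" unfolding U0_def by (rule assms(7))
  have wpos: "\<And>y. y \<in> \<Omega> \<Longrightarrow> w y > 0" using assms(5) by blast
  have Gk: "\<And>y k. G y $ k = pd k w y" by (simp add: G_def grad_def)
  have contG: "continuous_on \<Omega> G"
  proof -
    have "continuous_on \<Omega> (\<lambda>y. \<chi> k. pd k w y)"
      by (intro continuous_on_vec_lambda) (rule Ck3_D(3)[OF Cw])
    moreover have "G = (\<lambda>y. \<chi> k. pd k w y)" by (simp add: fun_eq_iff G_def grad_def)
    ultimately show ?thesis by simp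
  qed
  define N where "N = \<Omega> \<inter> G -` U0"
  have oN: "open N" unfolding N_def using continuous_open_preimage[OF contG oO oU0] .
  have xN: "x \<in> N" using assms(12,13) by (simp add: N_def U0_def G_def)
  have NO: "\<And>y. y \<in> N \<Longrightarrow> y \<in> \<Omega>" and NG: "\<And>y. y \<in> N \<Longrightarrow> G y \<in> U0" by (auto simp: N_def)
  have xO: "x \<in> \<Omega>" using assms(12) .
  have hG: "hpd i (\<lambda>y. G y $ k) y (pd i (pd k w) y)" if "y \<in> \<Omega>" for i k y
    unfolding Gk using hpd_LD[OF Ck3_D(4)[OF Cw] that] .
  have CH: "hpd i (\<lambda>y. F (G y)) y (\<Sum>k\<in>UNIV. pd k F (G y) * pd i (pd k w) y)"
    if "y \<in> \<Omega>" "(F has_derivative (\<lambda>h. \<Sum>k\<in>UNIV. h $ k * pd k F (G y))) (at (G y))" for F i y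
    by (rule hpd_chain[OF that(2) hG[OF that(1)]])
  have hw: "hpd i w y (pd i w y)" if "y \<in> \<Omega>" for i y by (rule hpd_LD[OF Ck3_D(2)[OF Cw] that])
  have hw1: "hpd i (pd j w) y (pd i (pd j w) y)" if "y \<in> \<Omega>" for i j y by (rule hpd_LD[OF Ck3_D(4)[OF Cw] that])
  have hw2: "hpd i (pd j (pd k w)) y (pd i (pd j (pd k w)) y)" if "y \<in> \<Omega>" for i j k y
    by (rule hpd_LD[OF Ck3_D(6)[OF Cw] that])
  define Sy where "Sy j y = (\<Sum>k\<in>UNIV. pd k V (G y) * pd j (pd k w) y)" for j y
  have Pf: "P = (\<lambda>y. (M * V (G y) + c) / w y)"
    by (simp add: fun_eq_iff P_def M_def c_def G_def add_divide_distrib)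
  have hP: "hpd j P y ((M * Sy j y - P y * pd j w y) / w y)" if y: "y \<in> N" for j y
  proof -
    have h1: "hpd j (\<lambda>y. V (G y)) y (Sy j y)"
      unfolding Sy_def by (rule CH[OF NO[OF y] C3_frechet0[OF CV oU0 NG[OF y]]])
    have h2: "hpd j (\<lambda>y. M * V (G y) + c) y (M * Sy j y + 0)"
      by (intro hpd_add hpd_cmult h1 hpd_const)
    have "w y > 0" using wpos NO y by blast
    then show ?thesis
      using hpd_divide[OF h2 hw[OF NO[OF y]]] unfolding Pf
      by (rule_tac hpd_eq) (auto simp: field_simps)
  qed
  have pdP: "pd j P y = (M * Sy j y - P y * pd j w y) / w y" if "y \<in> N" for j y
    using hpd_pd[OF hP[OF that]] .
  define \<xi> where "\<xi> = G x"
  have \<xi>U: "\<xi> \<in> U0" using NG[OF xN] by (simp add: \<xi>_def)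
  define w0 where "w0 = w x"
  define w1 where "w1 k = pd k w x" for k
  define w2 where "w2 a b = pd b (pd a w) x" for a b
  define w3 where "w3 a b c = pd c (pd b (pd a w)) x" for a b c
  define V1 where "V1 k = pd k V \<xi>" for k
  define V2 where "V2 a b = pd b (pd a V) \<xi>" for a b
  define V3 where "V3 a b c = pd c (pd b (pd a V)) \<xi>" for a b c
  define P0 where "P0 = P x"
  define S where "S j = (\<Sum>k\<in>UNIV. V1 k * w2 k j)" for j
  define DS where "DS i j = (\<Sum>k\<in>UNIV. (\<Sum>r\<in>UNIV. V2 k r * w2 r i) * w2 k j + V1 k * w3 k j i)" for i j
  define Q where "Q j = (M * S j - P0 * w1 j) / w0" for j
  define DQ where "DQ i j = ((M * DS i j - (Q i * w1 j + P0 * w2 j i)) * w0 - (M * S j - P0 * w1 j) * w1 i) / (w0 * w0)" for i j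
  define A' where "A' i j = V2 j i" for i j
  define DA where "DA i j = (\<Sum>k\<in>UNIV. V3 j i k * w2 k i)" for i j
  define W' where "W' i k = (\<Sum>m\<in>UNIV. V2 i m * w2 m k)" for i k
  define DT where "DT i = (\<Sum>l\<in>UNIV. \<Sum>m\<in>UNIV. (\<Sum>r\<in>UNIV. V3 l m r * w2 r i) * w2 m l + V2 l m * w3 m l i)" for i
  have w0pos: "w0 > 0" using wpos[OF xO] by (simp add: w0_def)
  have Sx: "Sy j x = S j" for j by (simp add: Sy_def S_def V1_def w2_def \<xi>_def)
  have Qx: "pd j P x = Q j" for j using pdP[OF xN, of j] by (simp add: Sx Q_def P0_def w0_def w1_def)
  have sw2: "\<And>a b. w2 a b = w2 b a" unfolding w2_def using C3_sym2[OF Cw oO xO] by metis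
  have sV2: "\<And>a b. V2 a b = V2 b a" unfolding V2_def using C3_sym2[OF CV oU0 \<xi>U] by metis
  have sw3a: "\<And>a b c. w3 a b c = w3 b a c" unfolding w3_def using C3_sym3b[OF Cw oO xO] by metis
  have sw3b: "\<And>a b c. w3 a b c = w3 a c b" unfolding w3_def using C3_sym3a[OF Cw oO xO] by metis
  have sV3a: "\<And>a b c. V3 a b c = V3 b a c" unfolding V3_def using C3_sym3b[OF CV oU0 \<xi>U] by metis
  have sV3b: "\<And>a b c. V3 a b c = V3 a c b" unfolding V3_def using C3_sym3a[OF CV oU0 \<xi>U] by metis
  define Qf where "Qf j y = (M * Sy j y - P y * pd j w y) / w y" for j y
  have Qfx: "Qf j x = Q j" for j by (simp add: Qf_def Q_def Sx P0_def w0_def w1_def)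
  have GxU: "G x \<in> U0" using NG[OF xN] .
  have gx: "grad w x = \<xi>" by (simp add: \<xi>_def G_def)
  have hS: "hpd i (\<lambda>y. Sy j y) x (DS i j)" for i j
  proof -
    have "hpd i (\<lambda>y. \<Sum>k\<in>UNIV. pd k V (G y) * pd j (pd k w) y) x
       (\<Sum>k\<in>UNIV. (\<Sum>r\<in>UNIV. pd r (pd k V) (G x) * pd i (pd r w) x) * pd j (pd k w) x + pd k V (G x) * pd i (pd j (pd k w)) x)"
      by (rule hpd_sumU, rule hpd_mult[OF CH[OF xO C3_frechet1[OF CV oU0 GxU]] hw2[OF xO]])
    then show ?thesis unfolding Sy_def DS_def V1_def V2_def w2_def w3_def \<xi>_def .
  qed
  have hQ: "hpd i (\<lambda>y. Qf j y) x (DQ i j)" for i j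
  proof -
    have "w x \<noteq> 0" using w0pos by (simp add: w0_def)
    from hpd_divide[OF hpd_diff[OF hpd_cmult[OF hS] hpd_mult[OF hP[OF xN] hw1[OF xO]]] hw[OF xO] this]
    show ?thesis unfolding Qf_def
      by (rule hpd_eq) (simp add: DQ_def Q_def Sx P0_def w0_def w1_def w2_def)
  qed
  have hAi: "hpd i (\<lambda>y. pd i (pd j V) (G y)) x (DA i j)" for i j
    using CH[OF xO C3_frechet2[OF CV oU0 GxU]] unfolding DA_def V3_def w2_def \<xi>_def .
  have hwp: "hpd i (\<lambda>y. w y powr (2 - ?n)) x ((2 - ?n) * w0 powr (2 - ?n - 1) * w1 i)" for i
    using hpd_powr[OF hw[OF xO] wpos[OF xO]] unfolding w0_def w1_def .
  have hL: "hpd i (\<lambda>y. w y powr (2 - ?n) * (\<Sum>j\<in>UNIV. pd i (pd j V) (G y) * Qf j y)) x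
      ((2 - ?n) * w0 powr (2 - ?n - 1) * w1 i * (\<Sum>j\<in>UNIV. A' i j * Q j)
        + w0 powr (2 - ?n) * (\<Sum>j\<in>UNIV. DA i j * Q j + A' i j * DQ i j))" for i
    using hpd_mult[OF hwp hpd_sumU[OF hpd_mult[OF hAi hQ]]]
    by (rule hpd_eq) (simp add: Qfx A'_def V2_def \<xi>_def w0_def)
  have Li: "pd i (\<lambda>y. w y powr (2 - ?n) * (\<Sum>j\<in>UNIV. A i j y * pd j P y)) x
      = (2 - ?n) * w0 powr (2 - ?n - 1) * w1 i * (\<Sum>j\<in>UNIV. A' i j * Q j)
        + w0 powr (2 - ?n) * (\<Sum>j\<in>UNIV. DA i j * Q j + A' i j * DQ i j)" for i
  proof (rule hpd_pd, rule hpd_cong[OF oN xN _ hL])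
    fix z assume "z \<in> N"
    then show "w z powr (2 - ?n) * (\<Sum>j\<in>UNIV. pd i (pd j V) (G z) * Qf j z)
       = w z powr (2 - ?n) * (\<Sum>j\<in>UNIV. A i j z * pd j P z)"
      by (simp add: Qf_def pdP A_def G_def)
  qed
  have Wx: "W i k x = W' i k" for i k
  proof -
    have "a i = (\<lambda>y. pd i V (G y))" by (simp add: fun_eq_iff a_def G_def)
    then show ?thesis unfolding W_def
      using hpd_pd[OF CH[OF xO C3_frechet1[OF CV oU0 GxU], of k i]]
      by (simp add: W'_def V2_def w2_def \<xi>_def)
  qed
  have WN: "W l l z = (\<Sum>m\<in>UNIV. pd m (pd l V) (G z) * pd l (pd m w) z)" if z: "z \<in> N" for l z
  proof -
    have "a l = (\<lambda>y. pd l V (G y))" by (simp add: fun_eq_iff a_def G_def)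
    then show ?thesis unfolding W_def
      using hpd_pd[OF CH[OF NO[OF z] C3_frechet1[OF CV oU0 NG[OF z]], of l l]] by simp
  qed
  have DTx: "pd i (\<lambda>y. \<Sum>l\<in>UNIV. W l l y) x = DT i" for i
  proof -
    have "hpd i (\<lambda>y. \<Sum>l\<in>UNIV. \<Sum>m\<in>UNIV. pd m (pd l V) (G y) * pd l (pd m w) y) x
      (\<Sum>l\<in>UNIV. \<Sum>m\<in>UNIV. (\<Sum>r\<in>UNIV. pd r (pd m (pd l V)) (G x) * pd i (pd r w) x) * pd l (pd m w) x
          + pd m (pd l V) (G x) * pd i (pd l (pd m w)) x)"
      by (rule hpd_sumU, rule hpd_sumU, rule hpd_mult[OF CH[OF xO C3_frechet2[OF CV oU0 GxU]] hw2[OF xO]])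
    then have "hpd i (\<lambda>y. \<Sum>l\<in>UNIV. W l l y) x (DT i)"
      by (rule_tac hpd_cong[OF oN xN]) (auto simp: WN DT_def V3_def V2_def w2_def w3_def \<xi>_def)
    then show ?thesis by (rule hpd_pd)
  qed
  have ax: "a i x = V1 i" for i by (simp add: a_def V1_def \<xi>_def G_def)
  have Ax: "A i j x = A' i j" for i j by (simp add: A_def A'_def V2_def \<xi>_def G_def)
  define K where "K = w0 powr (1 - ?n)"
  have K1: "w0 powr (2 - ?n - 1) = K"
  proof -
    have "2 - ?n - 1 = 1 - ?n" by simp
    then show ?thesis by (simp add: K_def)
  qed
  have K2: "w0 powr (2 - ?n) = w0 * K"
  proof -
    have "w0 powr (2 - ?n) = w0 powr (1 + (1 - ?n))" by simp
    also have "\<dots> = w0 powr 1 * w0 powr (1 - ?n)" by (rule powr_add)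
    also have "\<dots> = w0 * K" using w0pos by (simp add: K_def)
    finally show ?thesis .
  qed
  have L: "(\<Sum>i\<in>UNIV. pd i (\<lambda>y. w y powr (2 - ?n) * (\<Sum>j\<in>UNIV. A i j y * pd j P y)) x)
     = K * (w0 * (\<Sum>i\<in>UNIV. \<Sum>j\<in>UNIV. DA i j * Q j + A' i j * DQ i j)
            + (2 - ?n) * (\<Sum>i\<in>UNIV. w1 i * (\<Sum>j\<in>UNIV. A' i j * Q j)))"
  proof -
    have "(\<Sum>i\<in>UNIV. pd i (\<lambda>y. w y powr (2 - ?n) * (\<Sum>j\<in>UNIV. A i j y * pd j P y)) x)
      = (\<Sum>i\<in>UNIV. K * (w0 * (\<Sum>j\<in>UNIV. DA i j * Q j + A' i j * DQ i j)
            + (2 - ?n) * (w1 i * (\<Sum>j\<in>UNIV. A' i j * Q j))))"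
      unfolding Li K1 K2 by (rule sum.cong[OF refl]) (simp add: algebra_simps)
    also have "\<dots> = K * ((\<Sum>i\<in>UNIV. w0 * (\<Sum>j\<in>UNIV. DA i j * Q j + A' i j * DQ i j))
            + (\<Sum>i\<in>UNIV. (2 - ?n) * (w1 i * (\<Sum>j\<in>UNIV. A' i j * Q j))))"
      by (simp only: sum_distrib_left[symmetric] sum.distrib)
    also have "\<dots> = K * (w0 * (\<Sum>i\<in>UNIV. \<Sum>j\<in>UNIV. DA i j * Q j + A' i j * DQ i j)
            + (2 - ?n) * (\<Sum>i\<in>UNIV. w1 i * (\<Sum>j\<in>UNIV. A' i j * Q j)))"
      by (simp only: sum_distrib_left[symmetric])
    finally show ?thesis .
  qed
  have alg_inst: "w0 * (\<Sum>i\<in>UNIV. \<Sum>j\<in>UNIV. DA i j * Q j + A' i j * DQ i j)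
            + (2 - ?n) * (\<Sum>i\<in>UNIV. w1 i * (\<Sum>j\<in>UNIV. A' i j * Q j))
     = - ?n * (\<Sum>i\<in>UNIV. (\<Sum>j\<in>UNIV. A' i j * Q j) * w1 i) - P0 * (\<Sum>i\<in>UNIV. W' i i)
      + M * ((\<Sum>i\<in>UNIV. \<Sum>k\<in>UNIV. W' i k * W' k i) + (\<Sum>i\<in>UNIV. DT i * V1 i))
      - P0 * (\<Sum>i\<in>UNIV. \<Sum>j\<in>UNIV. \<Sum>k\<in>UNIV. w1 j * V3 i j k * w2 i k)"
    by (rule alg[OF w0pos sw2 sV2 sw3a sw3b sV3a sV3b S_def DS_def Q_def DQ_def A'_def DA_def W'_def DT_def])
  show ?thesis
    apply (subst L)
    apply (simp only: Ax Qx Wx DTx ax gx w1_def[symmetric] w2_def[symmetric] V3_def[symmetric]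
        P0_def[symmetric] w0_def[symmetric] K_def[symmetric] M_def[symmetric])
    apply (subst alg_inst)
    apply (rule refl)
    done
qed


end
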